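(* Let $T$ be a ditree, let $S_1,\dots,S_t$ be all the source sets and sink sets of $T$ that contain no leaf of $T$, and let $\mathcal{L}$ be the set of all leaves of $T$. Let $M=\mathcal{L}\cup\{s_1,\dots,s_t\}$ where $s_i\in S_i$ for each $i$ (so $M$ contains $\mathcal{L}$ and exactly one vertex from each $S_i$). Then $M$ is a minimum-size geodetic set of $T$.
   Context: All digraphs are finite, without loops or parallel arcs. The underlying undirected graph of a digraph is obtained by forgetting orientations and deleting parallel edges. A ditree is a digraph whose underlying undirected graph is a tree (it may contain $2$-cycles, i.e., pairs of opposite arcs $uv,vu$). A leaf is a vertex of degree $1$ in the underlying undirected graph. For $S\subseteq V(D)$, $N^-(S)$ (resp. $N^+(S)$) is the set of vertices outside $S$ having an arc to (resp. from) some vertex of $S$. A source set is a maximal strongly connected component $S$ with $N^-(S)\setminus S=\emptyset$; a sink set is a maximal strongly connected component $S$ with $N^+(S)\setminus S=\emptyset$. For vertices $u,v$, $I(u,v)$ is the set of vertices on some shortest directed path from $u$ to $v$; for $S\subseteq V(D)$, $I(S)=\bigcup_{u,v\in S}(I(u,v)\cup I(v,u))$. A geodetic set is a set $S$ with $I(S)=V(D)$. *)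

theory Defs
  imports Main
begin

text \<open>A digraph is given by a vertex set V and an arc set A (pairs (u,v) = arc u->v).\<close>

definition digraph :: "'a set \<Rightarrow> ('a \<times> 'a) set \<Rightarrow> bool" where
  "digraph V A \<longleftrightarrow> finite V \<and> A \<subseteq> V \<times> V \<and> (\<forall>v. (v, v) \<notin> A)"

definition uadj :: "('a \<times> 'a) set \<Rightarrow> 'a \<Rightarrow> 'a \<Rightarrow> bool" where
  "uadj A u v \<longleftrightarrow> (u, v) \<in> A \<or> (v, u) \<in> A"

definition uconnected :: "'a set \<Rightarrow> ('a \<times> 'a) set \<Rightarrow> bool" where
  "uconnected V A \<longleftrightarrow> (\<forall>u\<in>V. \<forall>v\<in>V. (u, v) \<in> {(x, y). uadj A x y}\<^sup>*)"

definition ucycle :: "'a set \<Rightarrow> ('a \<times> 'a) set \<Rightarrow> 'a list \<Rightarrow> bool" where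
  "ucycle V A c \<longleftrightarrow> length c \<ge> 3 \<and> distinct c \<and> set c \<subseteq> V \<and>
     (\<forall>i < length c. uadj A (c ! i) (c ! ((i + 1) mod length c)))"

definition ditree :: "'a set \<Rightarrow> ('a \<times> 'a) set \<Rightarrow> bool" where
  "ditree V A \<longleftrightarrow> digraph V A \<and> V \<noteq> {} \<and> uconnected V A \<and> (\<nexists>c. ucycle V A c)"

definition leaf :: "'a set \<Rightarrow> ('a \<times> 'a) set \<Rightarrow> 'a \<Rightarrow> bool" where
  "leaf V A v \<longleftrightarrow> v \<in> V \<and> card {w \<in> V. uadj A v w} = 1"

definition leaves :: "'a set \<Rightarrow> ('a \<times> 'a) set \<Rightarrow> 'a set" where
  "leaves V A = {v. leaf V A v}"

definition in_nbhd :: "'a set \<Rightarrow> ('a \<times> 'a) set \<Rightarrow> 'a set \<Rightarrow> 'a set" where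
  "in_nbhd V A S = {x \<in> V - S. \<exists>y\<in>S. (x, y) \<in> A}"

definition out_nbhd :: "'a set \<Rightarrow> ('a \<times> 'a) set \<Rightarrow> 'a set \<Rightarrow> 'a set" where
  "out_nbhd V A S = {x \<in> V - S. \<exists>y\<in>S. (y, x) \<in> A}"

definition scc :: "'a set \<Rightarrow> ('a \<times> 'a) set \<Rightarrow> 'a set \<Rightarrow> bool" where
  "scc V A S \<longleftrightarrow> (\<exists>u\<in>V. S = {w \<in> V. (u, w) \<in> A\<^sup>* \<and> (w, u) \<in> A\<^sup>*})"

definition source_set :: "'a set \<Rightarrow> ('a \<times> 'a) set \<Rightarrow> 'a set \<Rightarrow> bool" where
  "source_set V A S \<longleftrightarrow> scc V A S \<and> in_nbhd V A S = {}"

definition sink_set :: "'a set \<Rightarrow> ('a \<times> 'a) set \<Rightarrow> 'a set \<Rightarrow> bool" where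
  "sink_set V A S \<longleftrightarrow> scc V A S \<and> out_nbhd V A S = {}"

definition dpath :: "('a \<times> 'a) set \<Rightarrow> 'a \<Rightarrow> 'a \<Rightarrow> 'a list \<Rightarrow> bool" where
  "dpath A u v p \<longleftrightarrow> p \<noteq> [] \<and> hd p = u \<and> last p = v \<and> distinct p \<and>
     (\<forall>i. Suc i < length p \<longrightarrow> (p ! i, p ! Suc i) \<in> A)"

definition shortest_dpath :: "('a \<times> 'a) set \<Rightarrow> 'a \<Rightarrow> 'a \<Rightarrow> 'a list \<Rightarrow> bool" where
  "shortest_dpath A u v p \<longleftrightarrow> dpath A u v p \<and> (\<forall>q. dpath A u v q \<longrightarrow> length p \<le> length q)"

definition interval :: "('a \<times> 'a) set \<Rightarrow> 'a \<Rightarrow> 'a \<Rightarrow> 'a set" where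
  "interval A u v = {x. \<exists>p. shortest_dpath A u v p \<and> x \<in> set p}"

definition interval_set :: "('a \<times> 'a) set \<Rightarrow> 'a set \<Rightarrow> 'a set" where
  "interval_set A S = (\<Union>u\<in>S. \<Union>v\<in>S. interval A u v \<union> interval A v u)"

definition geodetic :: "'a set \<Rightarrow> ('a \<times> 'a) set \<Rightarrow> 'a set \<Rightarrow> bool" where
  "geodetic V A S \<longleftrightarrow> S \<subseteq> V \<and> interval_set A S = V"

end

theory Submission
  imports Defs "HOL-Library.Transitive_Closure_Table"
begin


definition Aoff :: "('a \<times> 'a) set \<Rightarrow> 'a \<Rightarrow> ('a \<times> 'a) set" where
  "Aoff A c = {(a, b). (a, b) \<in> A \<and> a \<noteq> c \<and> b \<noteq> c}"

definition Uoff :: "('a \<times> 'a) set \<Rightarrow> 'a \<Rightarrow> ('a \<times> 'a) set" where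
  "Uoff A c = {(a, b). uadj A a b \<and> a \<noteq> c \<and> b \<noteq> c}"

definition br :: "('a \<times> 'a) set \<Rightarrow> 'a \<Rightarrow> 'a \<Rightarrow> 'a set" where
  "br A c d = {y. (d, y) \<in> (Uoff A c)\<^sup>*}"

definition good :: "'a set \<Rightarrow> ('a \<times> 'a) set \<Rightarrow> 'a set \<Rightarrow> bool" where
  "good V A M0 \<longleftrightarrow> ditree V A \<and> leaves V A \<subseteq> M0 \<and>
     (\<forall>S. (source_set V A S \<or> sink_set V A S) \<and> S \<inter> leaves V A = {} \<longrightarrow> (\<exists>m\<in>S. m \<in> M0))"

lemma uadj_sym: "uadj A a b = uadj A b a"
  by (auto simp: uadj_def)

lemma uadj_conv [simp]: "uadj (A\<inverse>) = uadj A"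
  by (auto simp: uadj_def fun_eq_iff)

lemma Aoff_conv [simp]: "Aoff (A\<inverse>) c = (Aoff A c)\<inverse>"
  by (auto simp: Aoff_def)

lemma Uoff_conv [simp]: "Uoff (A\<inverse>) c = Uoff A c"
  by (auto simp: Uoff_def)

lemma br_conv [simp]: "br (A\<inverse>) c d = br A c d"
  by (auto simp: br_def)

lemma uadj_V: "digraph V A \<Longrightarrow> uadj A a b \<Longrightarrow> a \<in> V \<and> b \<in> V \<and> a \<noteq> b"
  by (auto simp: uadj_def digraph_def)

lemma ditree_conv: "ditree V A \<Longrightarrow> ditree V (A\<inverse>)"
  unfolding ditree_def digraph_def uconnected_def ucycle_def by auto

lemma leaves_conv [simp]: "leaves V (A\<inverse>) = leaves V A"
  by (simp add: leaves_def leaf_def)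

lemma scc_conv [simp]: "scc V (A\<inverse>) S = scc V A S"
  by (auto simp: scc_def rtrancl_converse)

lemma source_conv [simp]: "source_set V (A\<inverse>) S = sink_set V A S"
  by (auto simp: source_set_def sink_set_def in_nbhd_def out_nbhd_def)

lemma sink_conv [simp]: "sink_set V (A\<inverse>) S = source_set V A S"
  by (auto simp: source_set_def sink_set_def in_nbhd_def out_nbhd_def)

lemma good_conv: "good V A M0 \<Longrightarrow> good V (A\<inverse>) M0"
  unfolding good_def using ditree_conv by auto

lemma rtrancl_path_succ:
  "rtrancl_path r x xs y \<Longrightarrow> successively r (x # xs) \<and> last (x # xs) = y"
  by (induction rule: rtrancl_path.induct) (auto simp: successively_Cons)

lemma path_of_rtrancl:
  assumes "(x, y) \<in> R\<^sup>*"
  obtains p where "p \<noteq> []" "hd p = x" "last p = y" "distinct p"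
    "successively (\<lambda>a b. (a, b) \<in> R) p"
proof -
  have "(\<lambda>a b. (a, b) \<in> R)\<^sup>*\<^sup>* x y" using assms by (simp add: rtranclp_rtrancl_eq)
  then obtain xs where "rtrancl_path (\<lambda>a b. (a, b) \<in> R) x xs y"
    using rtranclp_eq_rtrancl_path by metis
  then obtain xs' where "rtrancl_path (\<lambda>a b. (a, b) \<in> R) x xs' y" "distinct (x # xs')"
    using rtrancl_path_distinct by metis
  then show ?thesis using that[of "x # xs'"] rtrancl_path_succ by fastforce
qed

lemma succ_rtrancl:
  "successively (\<lambda>a b. (a, b) \<in> R) p \<Longrightarrow> y \<in> set p \<Longrightarrow>
     (hd p, y) \<in> R\<^sup>* \<and> (y, last p) \<in> R\<^sup>*"
proof (induction p arbitrary: y)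
  case Nil then show ?case by simp
next
  case (Cons a p)
  show ?case
  proof (cases p)
    case Nil then show ?thesis using Cons by simp
  next
    case (Cons b q)
    have s: "(a, hd p) \<in> R" "successively (\<lambda>a b. (a, b) \<in> R) p"
      using Cons.prems(1) \<open>p = b # q\<close> by auto
    have hp: "(hd p, last p) \<in> R\<^sup>*" using Cons.IH[OF s(2), of "last p"] \<open>p = b # q\<close> by simp
    show ?thesis
    proof (cases "y = a")
      case True then show ?thesis using s hp \<open>p = b # q\<close> by auto
    next
      case False
      then have "y \<in> set p" using Cons.prems by simp
      then show ?thesis using Cons.IH[OF s(2)] s \<open>p = b # q\<close>
        by (auto intro: converse_rtrancl_into_rtrancl)
    qed
  qed
qed



lemma Uoff_avoid: "(d, z) \<in> (Uoff A c)\<^sup>* \<Longrightarrow> d \<noteq> c \<Longrightarrow> z \<noteq> c"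
  by (erule rtranclE) (auto simp: Uoff_def)

lemma Uoff_V: "(d, z) \<in> (Uoff A c)\<^sup>* \<Longrightarrow> d \<in> V \<Longrightarrow> digraph V A \<Longrightarrow> z \<in> V"
proof (induction rule: rtrancl_induct)
  case (step y z)
  then have "uadj A y z" by (simp add: Uoff_def)
  then show ?case using uadj_V[OF step(5)] by blast
qed simp

lemma cycle_lemma:
  assumes T: "ditree V A" and cd: "uadj A c d" and cy: "uadj A c y" and dy: "d \<noteq> y"
    and path: "(d, y) \<in> (Uoff A c)\<^sup>*"
  shows False
proof -
  have dg: "digraph V A" using T by (simp add: ditree_def)
  obtain p where p: "p \<noteq> []" "hd p = d" "last p = y" "distinct p"
    "successively (\<lambda>a b. (a, b) \<in> Uoff A c) p"
    using path_of_rtrancl[OF path] by blast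
  have dc: "d \<noteq> c" "c \<in> V" "d \<in> V" using uadj_V[OF dg cd] by auto
  have inp: "(d, z) \<in> (Uoff A c)\<^sup>*" if "z \<in> set p" for z
    using succ_rtrancl[OF p(5) that] p(2) by simp
  have cnot: "c \<notin> set p"
  proof
    assume "c \<in> set p"
    from Uoff_avoid[OF inp[OF this] dc(1)] show False by simp
  qed
  have pV: "set p \<subseteq> V"
  proof
    fix z assume "z \<in> set p"
    from Uoff_V[OF inp[OF this] dc(3) dg] show "z \<in> V" .
  qed
  have len: "length p \<ge> 2"
  proof (rule ccontr)
    assume "\<not> 2 \<le> length p"
    moreover have "length p \<noteq> 0" using p(1) by simp
    ultimately have "length p = 1" by linarith
    then have "hd p = last p" by (cases p) auto
    then show False using p dy by simp
  qed
  define cyc where "cyc = c # p"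
  have "ucycle V A cyc"
    unfolding ucycle_def
  proof (intro conjI allI impI)
    show "3 \<le> length cyc" using len cyc_def by simp
    show "distinct cyc" using cnot p(4) cyc_def by simp
    show "set cyc \<subseteq> V" using pV dc cyc_def by simp
  next
    fix i assume i: "i < length cyc"
    show "uadj A (cyc ! i) (cyc ! ((i + 1) mod length cyc))"
    proof (cases "i = length p")
      case True
      then have "(i + 1) mod length cyc = 0" using cyc_def by simp
      moreover have "cyc ! i = y" using True p(1,3) cyc_def by (simp add: last_conv_nth)
      ultimately show ?thesis using cy cyc_def by (simp add: uadj_sym)
    next
      case False
      then have ii: "i < length p" "(i + 1) mod length cyc = i + 1" using i cyc_def by auto
      show ?thesis
      proof (cases i)
        case 0
        then show ?thesis using ii cd p(1,2) cyc_def by (simp add: hd_conv_nth)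
      next
        case (Suc j)
        have "(p ! j, p ! Suc j) \<in> Uoff A c" using successively_nth[OF p(5)] ii Suc by simp
        then show ?thesis using ii Suc cyc_def by (simp add: Uoff_def)
      qed
    qed
  qed
  then show False using T by (auto simp: ditree_def)
qed

lemma Uoff_sym: "(a, b) \<in> (Uoff A c)\<^sup>* \<Longrightarrow> (b, a) \<in> (Uoff A c)\<^sup>*"
proof -
  have "sym (Uoff A c)" by (auto simp: sym_def Uoff_def uadj_def)
  then have "sym ((Uoff A c)\<^sup>*)" by (rule sym_rtrancl)
  then show "(a, b) \<in> (Uoff A c)\<^sup>* \<Longrightarrow> (b, a) \<in> (Uoff A c)\<^sup>*" by (auto simp: sym_def)
qed

lemma br_disj:
  assumes T: "ditree V A" and "uadj A c d1" "uadj A c d2" "d1 \<noteq> d2"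
  shows "br A c d1 \<inter> br A c d2 = {}"
proof (rule ccontr)
  assume "br A c d1 \<inter> br A c d2 \<noteq> {}"
  then obtain y where "y \<in> br A c d1" "y \<in> br A c d2" by blast
  then have "(d1, y) \<in> (Uoff A c)\<^sup>*" "(d2, y) \<in> (Uoff A c)\<^sup>*" unfolding br_def by simp_all
  then have "(d1, d2) \<in> (Uoff A c)\<^sup>*" using Uoff_sym[of d2 y] rtrancl_trans[of d1 y] by blast
  then show False using cycle_lemma[OF T assms(2,3,4)] by blast
qed

lemma br_self: "d \<in> br A c d" by (simp add: br_def)

lemma br_nbr:
  assumes T: "ditree V A" and "uadj A c d" "uadj A c y" "y \<in> br A c d"
  shows "y = d"
proof (rule ccontr)
  assume "y \<noteq> d"
  then have "br A c d \<inter> br A c y = {}" using br_disj[OF T assms(2,3)] by simp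
  moreover have "y \<in> br A c y" by (rule br_self)
  ultimately show False using assms(4) by blast
qed

lemma center_notin_br:
  assumes T: "ditree V A" and "uadj A c d"
  shows "c \<notin> br A c d"
proof
  assume "c \<in> br A c d"
  then have h: "(d, c) \<in> (Uoff A c)\<^sup>*" unfolding br_def by simp
  have "digraph V A" using T by (simp add: ditree_def)
  then have "d \<noteq> c" using uadj_V[OF _ assms(2)] by blast
  then show False using Uoff_avoid[OF h] by simp
qed

lemma nbr_notin_br:
  assumes T: "ditree V A" and "uadj A c d" "uadj A c p" "p \<noteq> d"
  shows "p \<notin> br A c d"
  using br_nbr[OF T assms(2,3)] assms(4) by metis

lemma Aoff_in_br_back:
  assumes T: "ditree V A" and cd: "uadj A c d" and path: "(u, d) \<in> (Aoff A c)\<^sup>*"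
  shows "u \<in> br A c d \<and> (\<forall>q. q \<notin> br A c d \<longrightarrow> (u, d) \<in> (Aoff A q)\<^sup>*)"
  using path
proof (induction rule: converse_rtrancl_induct)
  case base
  then show ?case by (simp add: br_self)
next
  case (step y z)
  have yz: "(y, z) \<in> A" "y \<noteq> c" "z \<noteq> c" using step(1) by (auto simp: Aoff_def)
  have "(z, y) \<in> Uoff A c" using yz by (auto simp: Uoff_def uadj_def)
  then have ybr: "y \<in> br A c d" using step(3) by (auto simp: br_def)
  show ?case
  proof (intro conjI allI impI)
    show "y \<in> br A c d" by (fact ybr)
    fix q assume q: "q \<notin> br A c d"
    then have "(y, z) \<in> Aoff A q" using yz ybr step(3) by (auto simp: Aoff_def)
    then show "(y, d) \<in> (Aoff A q)\<^sup>*" using step(3) q by (meson converse_rtrancl_into_rtrancl)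
  qed
qed

lemma Aoff_in_br_fwd:
  assumes T: "ditree V A" and cd: "uadj A c d" and path: "(d, w) \<in> (Aoff A c)\<^sup>*"
  shows "w \<in> br A c d \<and> (\<forall>q. q \<notin> br A c d \<longrightarrow> (d, w) \<in> (Aoff A q)\<^sup>*)"
proof -
  have "(w, d) \<in> (Aoff (A\<inverse>) c)\<^sup>*" using path by (simp add: rtrancl_converse)
  from Aoff_in_br_back[OF ditree_conv[OF T] _ this] cd
  show ?thesis by (simp add: rtrancl_converse)
qed

lemma Uoff_in_br:
  assumes path: "(d, y) \<in> (Uoff A c)\<^sup>*"
  shows "\<forall>q. q \<notin> br A c d \<longrightarrow> (d, y) \<in> (Uoff A q)\<^sup>*"
  using path
proof (induction rule: rtrancl_induct)
  case base then show ?case by simp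
next
  case (step y z)
  have "y \<in> br A c d" "z \<in> br A c d" using step by (auto simp: br_def)
  show ?case
  proof (intro allI impI)
    fix q assume q: "q \<notin> br A c d"
    then have "(y, z) \<in> Uoff A q" using step(2) \<open>y \<in> br A c d\<close> \<open>z \<in> br A c d\<close>
      by (auto simp: Uoff_def)
    then show "(d, z) \<in> (Uoff A q)\<^sup>*" using step(3) q by (meson rtrancl_into_rtrancl)
  qed
qed



lemma src_lemma:
  assumes G: "good V A M0" and QV: "Q \<subseteq> V" and q: "q \<in> Q"
    and cl: "\<And>z y. (z, y) \<in> A \<Longrightarrow> y \<in> Q \<Longrightarrow> z \<in> Q"
  shows "\<exists>u\<in>Q. u \<in> M0"
proof -
  have T: "ditree V A" using G by (simp add: good_def)
  have dg: "digraph V A" using T by (simp add: ditree_def)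
  have finV: "finite V" using dg by (simp add: digraph_def)
  have clr: "z \<in> Q" if "(z, y) \<in> A\<^sup>*" "y \<in> Q" for z y
    using that(1)
  proof (induction rule: converse_rtrancl_induct)
    case base then show ?case using that(2) .
  next
    case (step a b) then show ?case using cl by simp
  qed
  define f where "f u = card {z \<in> Q. (z, u) \<in> A\<^sup>*}" for u
  obtain u where u: "u \<in> Q" "\<And>v. v \<in> Q \<Longrightarrow> f u \<le> f v"
    using ex_has_least_nat[of "\<lambda>v. v \<in> Q" q f] q by blast
  have minim: "(u, z) \<in> A\<^sup>*" if z: "z \<in> Q" "(z, u) \<in> A\<^sup>*" for z
  proof -
    let ?Z = "{z' \<in> Q. (z', z) \<in> A\<^sup>*}" and ?U = "{z' \<in> Q. (z', u) \<in> A\<^sup>*}"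
    have sub: "?Z \<subseteq> ?U"
    proof
      fix w assume "w \<in> ?Z"
      then have "w \<in> Q" "(w, z) \<in> A\<^sup>*" by simp_all
      then show "w \<in> ?U" using z(2) rtrancl_trans[of w z A u] by simp
    qed
    have fin: "finite ?U" using QV finV finite_subset[of ?U V] by blast
    have "card ?U \<le> card ?Z" using u(2)[OF z(1)] f_def by simp
    then have "card ?Z = card ?U" using card_mono[OF fin sub] by linarith
    then have "?Z = ?U" by (rule card_subset_eq[OF fin sub])
    moreover have "u \<in> ?U" using u(1) by simp
    ultimately show ?thesis by blast
  qed
  define S where "S = {w \<in> V. (u, w) \<in> A\<^sup>* \<and> (w, u) \<in> A\<^sup>*}"
  have uV: "u \<in> V" using u(1) QV by blast
  have sccS: "scc V A S" unfolding scc_def S_def using uV by (intro bexI[of _ u]) simp_all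
  have SQ: "S \<subseteq> Q"
  proof
    fix w assume "w \<in> S"
    then have "(w, u) \<in> A\<^sup>*" using S_def by simp
    then show "w \<in> Q" using clr u(1) by simp
  qed
  have innb: "in_nbhd V A S = {}"
  proof (rule ccontr)
    assume "in_nbhd V A S \<noteq> {}"
    then obtain x y where xy: "x \<in> V" "x \<notin> S" "y \<in> S" "(x, y) \<in> A"
      unfolding in_nbhd_def by blast
    have "(y, u) \<in> A\<^sup>*" using xy(3) S_def by simp
    with xy(4) have xu: "(x, u) \<in> A\<^sup>*" by (rule converse_rtrancl_into_rtrancl)
    have "x \<in> Q" using clr[OF xu u(1)] .
    then have "(u, x) \<in> A\<^sup>*" using minim xu by blast
    then have "x \<in> S" using xu xy(1) S_def by simp
    then show False using xy(2) by simp
  qed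
  have src: "source_set V A S" using sccS innb by (simp add: source_set_def)
  show ?thesis
  proof (cases "S \<inter> leaves V A = {}")
    case True
    have H: "\<forall>S. (source_set V A S \<or> sink_set V A S) \<and> S \<inter> leaves V A = {} \<longrightarrow> (\<exists>m\<in>S. m \<in> M0)"
      using G by (simp add: good_def)
    obtain m where "m \<in> S" "m \<in> M0" using H[rule_format, of S] src True by blast
    then show ?thesis using SQ by blast
  next
    case False
    then obtain m where "m \<in> S" "m \<in> leaves V A" by blast
    moreover have "leaves V A \<subseteq> M0" using G by (simp add: good_def)
    ultimately show ?thesis using SQ by blast
  qed
qed

lemma snk_lemma:
  assumes G: "good V A M0" and QV: "Q \<subseteq> V" and q: "q \<in> Q"
    and cl: "\<And>z y. (y, z) \<in> A \<Longrightarrow> y \<in> Q \<Longrightarrow> z \<in> Q"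
  shows "\<exists>u\<in>Q. u \<in> M0"
proof -
  have "\<And>z y. (z, y) \<in> A\<inverse> \<Longrightarrow> y \<in> Q \<Longrightarrow> z \<in> Q" using cl by simp
  from src_lemma[OF good_conv[OF G] QV q this] show ?thesis .
qed

lemma Aoff_startV:
  assumes "digraph V A" "(y, a) \<in> (Aoff A c)\<^sup>*" "a \<in> V"
  shows "y \<in> V"
  using assms(2)
proof (cases rule: converse_rtranclE)
  case base then show ?thesis using assms(3) by simp
next
  case (step z)
  then show ?thesis using assms(1) by (auto simp: Aoff_def digraph_def)
qed

lemma in_branch:
  assumes G: "good V A M0" and ac: "(a, c) \<in> A" and nca: "(c, a) \<notin> A"
  shows "\<exists>u\<in>M0. (u, a) \<in> (Aoff A c)\<^sup>*"
proof -
  have T: "ditree V A" using G by (simp add: good_def)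
  have dg: "digraph V A" using T by (simp add: ditree_def)
  have ca: "uadj A c a" using ac by (simp add: uadj_def)
  have aV: "a \<in> V" using uadj_V[OF dg ca] by blast
  define Q where "Q = {y. (y, a) \<in> (Aoff A c)\<^sup>*}"
  have QV: "Q \<subseteq> V"
  proof
    fix y assume "y \<in> Q"
    then show "y \<in> V" using Aoff_startV[OF dg _ aV] Q_def by simp
  qed
  have q: "a \<in> Q" using Q_def by simp
  have cl: "z \<in> Q" if zy: "(z, y) \<in> A" "y \<in> Q" for z y
  proof -
    have yp: "(y, a) \<in> (Aoff A c)\<^sup>*" using zy(2) Q_def by simp
    have ybr: "y \<in> br A c a" using Aoff_in_br_back[OF T ca yp] by blast
    have yc: "y \<noteq> c" using ybr center_notin_br[OF T ca] by blast
    show ?thesis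
    proof (cases "z = c")
      case True
      then have "uadj A c y" using zy(1) by (simp add: uadj_def)
      then have "y = a" using br_nbr[OF T ca _ ybr] by simp
      then show ?thesis using True zy(1) nca by simp
    next
      case False
      then have "(z, y) \<in> Aoff A c" using zy(1) yc by (simp add: Aoff_def)
      then show ?thesis using yp Q_def by (simp add: converse_rtrancl_into_rtrancl)
    qed
  qed
  have "\<exists>u\<in>Q. u \<in> M0" by (rule src_lemma[OF G QV q cl])
  then obtain u where "u \<in> Q" "u \<in> M0" ..
  then show ?thesis unfolding Q_def by blast
qed

lemma out_branch:
  assumes G: "good V A M0" and cb: "(c, b) \<in> A" and nbc: "(b, c) \<notin> A"
  shows "\<exists>w\<in>M0. (b, w) \<in> (Aoff A c)\<^sup>*"
proof -
  have "(b, c) \<in> A\<inverse>" "(c, b) \<notin> A\<inverse>" using cb nbc by auto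
  from in_branch[OF good_conv[OF G] this] show ?thesis by (simp add: rtrancl_converse)
qed

lemma last_step:
  assumes "(u, x) \<in> A\<^sup>*" "u \<noteq> x"
  shows "\<exists>a. (a, x) \<in> A \<and> (u, a) \<in> (Aoff A x)\<^sup>*"
  using assms
proof (induction rule: converse_rtrancl_induct)
  case base then show ?case by simp
next
  case (step u z)
  show ?case
  proof (cases "z = x")
    case True then show ?thesis using step by blast
  next
    case False
    then obtain a where a: "(a, x) \<in> A" "(z, a) \<in> (Aoff A x)\<^sup>*" using step by blast
    have "(u, z) \<in> Aoff A x" using step(1,4) False by (simp add: Aoff_def)
    then show ?thesis using a by (meson converse_rtrancl_into_rtrancl)
  qed
qed

lemma In_exists:
  assumes G: "good V A M0" and xV: "x \<in> V" and xM: "x \<notin> M0"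
  shows "\<exists>a u. (a, x) \<in> A \<and> u \<in> M0 \<and> (u, a) \<in> (Aoff A x)\<^sup>*"
proof -
  have dg: "digraph V A" using G by (simp add: good_def ditree_def)
  define Q where "Q = {y. (y, x) \<in> A\<^sup>*}"
  have QV: "Q \<subseteq> V"
  proof
    fix y assume "y \<in> Q"
    then have "(y, x) \<in> A\<^sup>*" using Q_def by simp
    then show "y \<in> V"
    proof (cases rule: converse_rtranclE)
      case base then show ?thesis using xV by simp
    next
      case (step z) then show ?thesis using dg by (auto simp: digraph_def)
    qed
  qed
  have cl: "z \<in> Q" if "(z, y) \<in> A" "y \<in> Q" for z y
    using that Q_def by (simp add: converse_rtrancl_into_rtrancl)
  have xQ: "x \<in> Q" using Q_def by simp
  have "\<exists>u\<in>Q. u \<in> M0" by (rule src_lemma[OF G QV xQ cl])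
  then obtain u where u: "u \<in> Q" "u \<in> M0" ..
  have ux: "u \<noteq> x" using u xM by metis
  have "(u, x) \<in> A\<^sup>*" using u(1) Q_def by simp
  from last_step[OF this ux] obtain a where "(a, x) \<in> A" "(u, a) \<in> (Aoff A x)\<^sup>*" by metis
  then show ?thesis using u(2) by metis
qed

lemma Out_exists:
  assumes G: "good V A M0" and xV: "x \<in> V" and xM: "x \<notin> M0"
  shows "\<exists>b w. (x, b) \<in> A \<and> w \<in> M0 \<and> (b, w) \<in> (Aoff A x)\<^sup>*"
proof -
  obtain a u where "(a, x) \<in> A\<inverse>" "u \<in> M0" "(u, a) \<in> (Aoff (A\<inverse>) x)\<^sup>*"
    using In_exists[OF good_conv[OF G] xV xM] by blast
  then have "(x, a) \<in> A" "u \<in> M0" "(a, u) \<in> (Aoff A x)\<^sup>*" by (simp_all add: rtrancl_converse)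
  then show ?thesis by blast
qed



lemma other_nbr:
  assumes T: "ditree V A" and cV: "c \<in> V" and nl: "\<not> leaf V A c" and cp: "uadj A c p"
  shows "\<exists>d. uadj A c d \<and> d \<noteq> p"
proof (rule ccontr)
  assume "\<not> (\<exists>d. uadj A c d \<and> d \<noteq> p)"
  then have all: "\<And>d. uadj A c d \<Longrightarrow> d = p" by blast
  have dg: "digraph V A" using T by (simp add: ditree_def)
  have pV: "p \<in> V" using uadj_V[OF dg cp] by simp
  have "{w \<in> V. uadj A c w} = {p}"
  proof
    show "{w \<in> V. uadj A c w} \<subseteq> {p}" using all by blast
    show "{p} \<subseteq> {w \<in> V. uadj A c w}" using pV cp by simp
  qed
  then have "leaf V A c" using cV by (simp add: leaf_def)
  then show False using nl by simp
qed

lemma two_cycle_branch: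
  assumes G: "good V A M0" and pc: "(p, c) \<in> A" and cp: "(c, p) \<in> A"
  shows "(\<exists>u\<in>M0. (u, c) \<in> (Aoff A p)\<^sup>*) \<or> (\<exists>w\<in>M0. (c, w) \<in> (Aoff A p)\<^sup>*)"
  using pc cp
proof (induction "card (br A p c)" arbitrary: p c rule: less_induct)
  case less
  have T: "ditree V A" using G by (simp add: good_def)
  have dg: "digraph V A" using T by (simp add: ditree_def)
  have ucp: "uadj A c p" using less.prems by (simp add: uadj_def)
  have cV: "c \<in> V" and cpne: "c \<noteq> p" using uadj_V[OF dg ucp] by simp_all
  show ?case
  proof (cases "c \<in> M0")
    case True
    have "(c, c) \<in> (Aoff A p)\<^sup>*" by simp
    then show ?thesis using True by blast
  next
    case False
    have "leaves V A \<subseteq> M0" using G by (simp add: good_def)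
    then have nl: "\<not> leaf V A c" using False by (auto simp: leaves_def)
    obtain d where cd: "uadj A c d" and dp: "d \<noteq> p" using other_nbr[OF T cV nl ucp] by blast
    have dV: "d \<in> V" and dc: "c \<noteq> d" using uadj_V[OF dg cd] by simp_all
    have pnot: "p \<notin> br A c d" using nbr_notin_br[OF T cd ucp] dp by simp
    have hback: "(u, c) \<in> (Aoff A p)\<^sup>*" if "(u, d) \<in> (Aoff A c)\<^sup>*" "(d, c) \<in> A" for u
    proof -
      have "(u, d) \<in> (Aoff A p)\<^sup>*" using Aoff_in_br_back[OF T cd that(1)] pnot by simp
      moreover have "(d, c) \<in> Aoff A p" using that(2) dp cpne by (simp add: Aoff_def)
      ultimately show ?thesis by (rule rtrancl_into_rtrancl)
    qed
    have hfwd: "(c, w) \<in> (Aoff A p)\<^sup>*" if "(d, w) \<in> (Aoff A c)\<^sup>*" "(c, d) \<in> A" for w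
    proof -
      have "(d, w) \<in> (Aoff A p)\<^sup>*" using Aoff_in_br_fwd[OF T cd that(1)] pnot by simp
      moreover have "(c, d) \<in> Aoff A p" using that(2) dp cpne by (simp add: Aoff_def)
      ultimately show ?thesis by (metis converse_rtrancl_into_rtrancl)
    qed
    consider (a) "(d, c) \<in> A" "(c, d) \<notin> A" | (b) "(c, d) \<in> A" "(d, c) \<notin> A"
      | (c) "(c, d) \<in> A" "(d, c) \<in> A"
      using cd by (auto simp: uadj_def)
    then show ?thesis
    proof cases
      case a
      have "\<exists>u\<in>M0. (u, d) \<in> (Aoff A c)\<^sup>*" by (rule in_branch[OF G a])
      then obtain u where "u \<in> M0" "(u, d) \<in> (Aoff A c)\<^sup>*" ..
      then show ?thesis using hback a(1) by blast
    next
      case b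
      have "\<exists>w\<in>M0. (d, w) \<in> (Aoff A c)\<^sup>*" by (rule out_branch[OF G b])
      then obtain w where "w \<in> M0" "(d, w) \<in> (Aoff A c)\<^sup>*" ..
      then show ?thesis using hfwd b(1) by blast
    next
      case c
      have sub: "br A c d \<subseteq> br A p c"
      proof
        fix y assume "y \<in> br A c d"
        then have "(d, y) \<in> (Uoff A c)\<^sup>*" by (simp add: br_def)
        then have "(d, y) \<in> (Uoff A p)\<^sup>*" using Uoff_in_br pnot by metis
        moreover have "(c, d) \<in> Uoff A p" using cd dp cpne by (simp add: Uoff_def)
        ultimately have "(c, y) \<in> (Uoff A p)\<^sup>*" by (metis converse_rtrancl_into_rtrancl)
        then show "y \<in> br A p c" by (simp add: br_def)
      qed
      have cin: "c \<in> br A p c" by (rule br_self)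
      have cnot: "c \<notin> br A c d" by (rule center_notin_br[OF T cd])
      have fin: "finite (br A p c)"
      proof (rule finite_subset)
        show "br A p c \<subseteq> V"
        proof
          fix y assume "y \<in> br A p c"
          then have "(c, y) \<in> (Uoff A p)\<^sup>*" by (simp add: br_def)
          from Uoff_V[OF this cV dg] show "y \<in> V" .
        qed
        show "finite V" using dg by (simp add: digraph_def)
      qed
      have "br A c d \<subset> br A p c" using sub cin cnot by blast
      then have lt: "card (br A c d) < card (br A p c)" by (rule psubset_card_mono[OF fin])
      have IH: "(\<exists>u\<in>M0. (u, d) \<in> (Aoff A c)\<^sup>*) \<or> (\<exists>w\<in>M0. (d, w) \<in> (Aoff A c)\<^sup>*)"
        using less.hyps[OF lt] c by blast
      then show ?thesis
      proof
        assume "\<exists>u\<in>M0. (u, d) \<in> (Aoff A c)\<^sup>*"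
        then obtain u where "u \<in> M0" "(u, d) \<in> (Aoff A c)\<^sup>*" ..
        then show ?thesis using hback c(2) by blast
      next
        assume "\<exists>w\<in>M0. (d, w) \<in> (Aoff A c)\<^sup>*"
        then obtain w where "w \<in> M0" "(d, w) \<in> (Aoff A c)\<^sup>*" ..
        then show ?thesis using hfwd c(1) by blast
      qed
    qed
  qed
qed



lemma succ_dpath:
  "successively (\<lambda>a b. (a, b) \<in> A) p \<Longrightarrow> p \<noteq> [] \<Longrightarrow> hd p = u \<Longrightarrow> last p = w \<Longrightarrow> distinct p
    \<Longrightarrow> dpath A u w p"
  unfolding dpath_def successively_conv_nth by blast

lemma dpath_succ: "dpath A u w p \<Longrightarrow> successively (\<lambda>a b. (a, b) \<in> A) p"
  unfolding dpath_def successively_conv_nth by blast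

lemma join:
  assumes T: "ditree V A" and ax: "(a, x) \<in> A" and xb: "(x, b) \<in> A" and ab: "a \<noteq> b"
    and pu: "(u, a) \<in> (Aoff A x)\<^sup>*" and pw: "(b, w) \<in> (Aoff A x)\<^sup>*"
  shows "\<exists>p. dpath A u w p \<and> x \<in> set p"
proof -
  obtain p1 where p1: "p1 \<noteq> []" "hd p1 = u" "last p1 = a" "distinct p1"
    "successively (\<lambda>a b. (a, b) \<in> Aoff A x) p1"
    using path_of_rtrancl[OF pu] by blast
  obtain p2 where p2: "p2 \<noteq> []" "hd p2 = b" "last p2 = w" "distinct p2"
    "successively (\<lambda>a b. (a, b) \<in> Aoff A x) p2"
    using path_of_rtrancl[OF pw] by blast
  have xa: "uadj A x a" using ax by (simp add: uadj_def)
  have xb': "uadj A x b" using xb by (simp add: uadj_def)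
  have in1: "y \<in> br A x a" if "y \<in> set p1" for y
  proof -
    have "(y, a) \<in> (Aoff A x)\<^sup>*" using succ_rtrancl[OF p1(5) that] p1(3) by simp
    from Aoff_in_br_back[OF T xa this] show ?thesis by simp
  qed
  have in2: "y \<in> br A x b" if "y \<in> set p2" for y
  proof -
    have "(b, y) \<in> (Aoff A x)\<^sup>*" using succ_rtrancl[OF p2(5) that] p2(2) by simp
    from Aoff_in_br_fwd[OF T xb' this] show ?thesis by simp
  qed
  have x1: "x \<notin> set p1" using in1 center_notin_br[OF T xa] by metis
  have x2: "x \<notin> set p2" using in2 center_notin_br[OF T xb'] by metis
  have dj: "set p1 \<inter> set p2 = {}" using in1 in2 br_disj[OF T xa xb' ab] by blast
  define P where "P = p1 @ x # p2"
  have s1: "successively (\<lambda>a b. (a, b) \<in> A) p1"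
    using successively_mono[OF p1(5)] by (simp add: Aoff_def)
  have s2: "successively (\<lambda>a b. (a, b) \<in> A) p2"
    using successively_mono[OF p2(5)] by (simp add: Aoff_def)
  have s2': "successively (\<lambda>a b. (a, b) \<in> A) (x # p2)"
    using s2 p2(1,2) xb by (simp add: successively_Cons)
  have sP: "successively (\<lambda>a b. (a, b) \<in> A) P"
    unfolding P_def successively_append_iff using s1 s2' p1(3) ax by simp
  have "dpath A u w P"
  proof (rule succ_dpath[OF sP])
    show "P \<noteq> []" using P_def by simp
    show "hd P = u" using P_def p1(1,2) by simp
    show "last P = w" using P_def p2(1,3) by simp
    show "distinct P" using P_def p1(4) p2(4) x1 x2 dj by auto
  qed
  then show ?thesis using P_def by auto
qed

lemma cover:
  assumes G: "good V A M0" and xV: "x \<in> V"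
  shows "\<exists>u\<in>M0. \<exists>w\<in>M0. \<exists>p. dpath A u w p \<and> x \<in> set p"
proof (cases "x \<in> M0")
  case True
  have "dpath A x x [x]" by (simp add: dpath_def)
  then show ?thesis using True by force
next
  case False
  have T: "ditree V A" using G by (simp add: good_def)
  obtain a u where a: "(a, x) \<in> A" "u \<in> M0" "(u, a) \<in> (Aoff A x)\<^sup>*"
    using In_exists[OF G xV False] by metis
  obtain b w where b: "(x, b) \<in> A" "w \<in> M0" "(b, w) \<in> (Aoff A x)\<^sup>*"
    using Out_exists[OF G xV False] by metis
  show ?thesis
  proof (cases "a = b")
    case False
    from join[OF T a(1) b(1) False a(3) b(3)] show ?thesis using a(2) b(2) by blast
  next
    case True
    have "leaves V A \<subseteq> M0" using G by (simp add: good_def)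
    then have nl: "\<not> leaf V A x" using \<open>x \<notin> M0\<close> by (auto simp: leaves_def)
    have xa: "uadj A x a" using a(1) by (simp add: uadj_def)
    obtain n where xn: "uadj A x n" and na: "n \<noteq> a" using other_nbr[OF T xV nl xa] by blast
    consider (i) "(n, x) \<in> A" "(x, n) \<notin> A" | (o) "(x, n) \<in> A" "(n, x) \<notin> A"
      | (t) "(x, n) \<in> A" "(n, x) \<in> A"
      using xn by (auto simp: uadj_def)
    then show ?thesis
    proof cases
      case i
      have "\<exists>u\<in>M0. (u, n) \<in> (Aoff A x)\<^sup>*" by (rule in_branch[OF G i])
      then obtain u' where u': "u' \<in> M0" "(u', n) \<in> (Aoff A x)\<^sup>*" ..
      have "n \<noteq> b" using na True by simp
      from join[OF T i(1) b(1) this u'(2) b(3)] show ?thesis using u'(1) b(2) by blast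
    next
      case o
      have "\<exists>w\<in>M0. (n, w) \<in> (Aoff A x)\<^sup>*" by (rule out_branch[OF G o])
      then obtain w' where w': "w' \<in> M0" "(n, w') \<in> (Aoff A x)\<^sup>*" ..
      have "a \<noteq> n" using na by simp
      from join[OF T a(1) o(1) this a(3) w'(2)] show ?thesis using a(2) w'(1) by blast
    next
      case t
      from two_cycle_branch[OF G t(1) t(2)]
      show ?thesis
      proof
        assume "\<exists>u\<in>M0. (u, n) \<in> (Aoff A x)\<^sup>*"
        then obtain u' where u': "u' \<in> M0" "(u', n) \<in> (Aoff A x)\<^sup>*" ..
        have "n \<noteq> b" using na True by simp
        from join[OF T t(2) b(1) this u'(2) b(3)] show ?thesis using u'(1) b(2) by blast
      next
        assume "\<exists>w\<in>M0. (n, w) \<in> (Aoff A x)\<^sup>*"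
        then obtain w' where w': "w' \<in> M0" "(n, w') \<in> (Aoff A x)\<^sup>*" ..
        have "a \<noteq> n" using na by simp
        from join[OF T a(1) t(1) this a(3) w'(2)] show ?thesis using a(2) w'(1) by blast
      qed
    qed
  qed
qed

lemma succ_Uoff:
  assumes "successively (\<lambda>a b. (a, b) \<in> A) p" "y \<notin> set p"
  shows "successively (\<lambda>a b. (a, b) \<in> Uoff A y) p"
proof (rule successively_mono[OF assms(1)])
  fix a b assume "a \<in> set p" "b \<in> set p" "(a, b) \<in> A"
  then show "(a, b) \<in> Uoff A y" using assms(2) by (auto simp: Uoff_def uadj_def)
qed

lemma dpath_shortest:
  assumes T: "ditree V A" and dp: "dpath A u w p"
  shows "shortest_dpath A u w p"
  unfolding shortest_dpath_def
proof (intro conjI allI impI)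
  show "dpath A u w p" by (fact dp)
  fix q assume dq: "dpath A u w q"
  have sub: "set p \<subseteq> set q"
  proof
    fix y assume yp: "y \<in> set p"
    show "y \<in> set q"
    proof (rule ccontr)
      assume yq: "y \<notin> set q"
      have hq: "hd q = u" "last q = w" "q \<noteq> []" using dq by (auto simp: dpath_def)
      have hp: "hd p = u" "last p = w" "p \<noteq> []" "distinct p" using dp by (auto simp: dpath_def)
      have yu: "y \<noteq> u" using yq hq by (metis hd_in_set)
      have yw: "y \<noteq> w" using yq hq by (metis last_in_set)
      obtain p1 p2 where pp: "p = p1 @ y # p2" using split_list[OF yp] by blast
      have p1ne: "p1 \<noteq> []" using pp hp(1) yu by auto
      have p2ne: "p2 \<noteq> []" using pp hp(2) yw by auto
      have sp: "successively (\<lambda>a b. (a, b) \<in> A) p" by (rule dpath_succ[OF dp])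
      have s1: "successively (\<lambda>a b. (a, b) \<in> A) p1" and ay: "(last p1, y) \<in> A"
        and s2: "successively (\<lambda>a b. (a, b) \<in> A) p2" and yb: "(y, hd p2) \<in> A"
        using sp p1ne p2ne unfolding pp successively_append_iff by (auto simp: successively_Cons)
      have dpp: "distinct (p1 @ y # p2)" using hp(4) pp by simp
      have y1: "y \<notin> set p1" and y2: "y \<notin> set p2" and d12: "set p1 \<inter> set p2 = {}"
        using dpp by auto
      have ab: "last p1 \<noteq> hd p2" using d12 p1ne p2ne by (metis disjoint_iff last_in_set hd_in_set)
      have r1: "(hd p1, last p1) \<in> (Uoff A y)\<^sup>*"
        using succ_rtrancl[OF succ_Uoff[OF s1 y1], of "last p1"] p1ne by simp
      have r2: "(hd p2, last p2) \<in> (Uoff A y)\<^sup>*"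
        using succ_rtrancl[OF succ_Uoff[OF s2 y2], of "last p2"] p2ne by simp
      have rq: "(hd q, last q) \<in> (Uoff A y)\<^sup>*"
        using succ_rtrancl[OF succ_Uoff[OF dpath_succ[OF dq] yq], of "last q"] last_in_set[OF hq(3)] by simp
      have "hd p1 = u" using pp hp(1) p1ne by simp
      moreover have "last p2 = w" using pp hp(2) p2ne by simp
      ultimately have "(last p1, u) \<in> (Uoff A y)\<^sup>*" "(u, w) \<in> (Uoff A y)\<^sup>*"
        "(w, hd p2) \<in> (Uoff A y)\<^sup>*"
        using r1 r2 rq hq Uoff_sym by metis+
      then have "(last p1, hd p2) \<in> (Uoff A y)\<^sup>*" by (meson rtrancl_trans)
      moreover have "uadj A y (last p1)" "uadj A y (hd p2)" using ay yb by (auto simp: uadj_def)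
      ultimately show False using cycle_lemma[OF T _ _ ab] by blast
    qed
  qed
  have "length p = card (set p)" using dp by (simp add: dpath_def distinct_card)
  also have "\<dots> \<le> card (set q)" using sub by (simp add: card_mono)
  also have "\<dots> = length q" using dq by (simp add: dpath_def distinct_card)
  finally show "length p \<le> length q" .
qed



lemma dpath_V:
  assumes dg: "digraph V A" and dp: "dpath A u w p" and uV: "u \<in> V" and x: "x \<in> set p"
  shows "x \<in> V"
proof -
  have "(u, x) \<in> A\<^sup>*" using succ_rtrancl[OF dpath_succ[OF dp] x] dp by (simp add: dpath_def)
  then show ?thesis
  proof (cases rule: rtranclE)
    case base then show ?thesis using uV by simp
  next
    case (step z) then show ?thesis using dg by (auto simp: digraph_def)
  qed
qed

lemma src_closed:
  assumes dg: "digraph V A" and S: "source_set V A S" and z: "z \<in> S" and uz: "(u, z) \<in> A\<^sup>*"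
  shows "u \<in> S"
  using uz
proof (induction rule: converse_rtrancl_induct)
  case base then show ?case using z .
next
  case (step a b)
  have aV: "a \<in> V" using step(1) dg by (auto simp: digraph_def)
  show ?case
  proof (rule ccontr)
    assume "a \<notin> S"
    then have "a \<in> in_nbhd V A S" using aV step(1,3) by (auto simp: in_nbhd_def)
    then show False using S by (simp add: source_set_def)
  qed
qed

lemma snk_closed:
  assumes dg: "digraph V A" and S: "sink_set V A S" and z: "z \<in> S" and uz: "(z, v) \<in> A\<^sup>*"
  shows "v \<in> S"
proof -
  have dg': "digraph V (A\<inverse>)" using dg by (auto simp: digraph_def)
  have "source_set V (A\<inverse>) S" using S by simp
  moreover have "(v, z) \<in> (A\<inverse>)\<^sup>*" using uz by (simp add: rtrancl_converse)
  ultimately show ?thesis using src_closed[OF dg' _ z] by blast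
qed

lemma scc_eq:
  assumes "scc V A S" "m \<in> S"
  shows "S = {w \<in> V. (m, w) \<in> A\<^sup>* \<and> (w, m) \<in> A\<^sup>*}"
proof -
  have "\<exists>u\<in>V. S = {w \<in> V. (u, w) \<in> A\<^sup>* \<and> (w, u) \<in> A\<^sup>*}"
    using assms(1) by (simp add: scc_def)
  then obtain u where u: "u \<in> V" "S = {w \<in> V. (u, w) \<in> A\<^sup>* \<and> (w, u) \<in> A\<^sup>*}" ..
  have m: "(u, m) \<in> A\<^sup>*" "(m, u) \<in> A\<^sup>*" using assms(2) u(2) by simp_all
  show ?thesis
  proof (intro set_eqI iffI)
    fix w assume "w \<in> S"
    then have w: "w \<in> V" "(u, w) \<in> A\<^sup>*" "(w, u) \<in> A\<^sup>*" using u(2) by simp_all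
    have "(m, w) \<in> A\<^sup>*" using rtrancl_trans[OF m(2) w(2)] .
    moreover have "(w, m) \<in> A\<^sup>*" using rtrancl_trans[OF w(3) m(1)] .
    ultimately show "w \<in> {w \<in> V. (m, w) \<in> A\<^sup>* \<and> (w, m) \<in> A\<^sup>*}" using w(1) by simp
  next
    fix w assume "w \<in> {w \<in> V. (m, w) \<in> A\<^sup>* \<and> (w, m) \<in> A\<^sup>*}"
    then have w: "w \<in> V" "(m, w) \<in> A\<^sup>*" "(w, m) \<in> A\<^sup>*" by simp_all
    have "(u, w) \<in> A\<^sup>*" using rtrancl_trans[OF m(1) w(2)] .
    moreover have "(w, u) \<in> A\<^sup>*" using rtrancl_trans[OF w(3) m(2)] .
    ultimately show "w \<in> S" using w(1) u(2) by simp
  qed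
qed

theorem lemma5:
  fixes V :: "'a set" and A :: "('a \<times> 'a) set" and s :: "'a set \<Rightarrow> 'a"
  assumes "ditree V A"
    and "\<forall>S. (source_set V A S \<or> sink_set V A S) \<and> S \<inter> leaves V A = {} \<longrightarrow> s S \<in> S"
  defines "M \<equiv> leaves V A \<union>
             s ` {S. (source_set V A S \<or> sink_set V A S) \<and> S \<inter> leaves V A = {}}"
  shows "geodetic V A M \<and> (\<forall>M'. geodetic V A M' \<longrightarrow> card M \<le> card M')"
proof -
  let ?SS = "{S. (source_set V A S \<or> sink_set V A S) \<and> S \<inter> leaves V A = {}}"
  have T: "ditree V A" by (fact assms(1))
  have dg: "digraph V A" using T by (simp add: ditree_def)
  have finV: "finite V" using dg by (simp add: digraph_def)
  have sS: "s S \<in> S" if "S \<in> ?SS" for S using assms(2) that by blast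
  have SV: "S \<subseteq> V" if "S \<in> ?SS" for S
    using that by (auto simp: source_set_def sink_set_def scc_def)
  have G: "good V A M"
    unfolding good_def
  proof (intro conjI allI impI)
    show "ditree V A" by (fact T)
    show "leaves V A \<subseteq> M" using M_def by simp
    fix S assume "(source_set V A S \<or> sink_set V A S) \<and> S \<inter> leaves V A = {}"
    then have "S \<in> ?SS" by simp
    then show "\<exists>m\<in>S. m \<in> M" using sS M_def by blast
  qed
  have MV: "M \<subseteq> V"
  proof
    fix m assume "m \<in> M"
    then consider "m \<in> leaves V A" | S where "S \<in> ?SS" "m = s S" using M_def by blast
    then show "m \<in> V"
    proof cases
      case 1 then show ?thesis by (simp add: leaves_def leaf_def)
    next
      case 2 then show ?thesis using sS SV by blast
    qed
  qed
  have geo: "geodetic V A M"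
    unfolding geodetic_def
  proof (intro conjI)
    show "M \<subseteq> V" by (fact MV)
    show "interval_set A M = V"
    proof
      show "interval_set A M \<subseteq> V"
      proof
        fix x assume "x \<in> interval_set A M"
        then obtain u v p where uv: "u \<in> M" "v \<in> M" and
          "shortest_dpath A u v p \<and> x \<in> set p \<or> shortest_dpath A v u p \<and> x \<in> set p"
          unfolding interval_set_def interval_def by blast
        then show "x \<in> V" using dpath_V[OF dg] MV unfolding shortest_dpath_def by blast
      qed
      show "V \<subseteq> interval_set A M"
      proof
        fix x assume xV: "x \<in> V"
        obtain u w p where "u \<in> M" "w \<in> M" "dpath A u w p" "x \<in> set p"
          using cover[OF G xV] by blast
        then have sh: "shortest_dpath A u w p" using dpath_shortest[OF T] by simp
        have "x \<in> interval A u w" unfolding interval_def using sh \<open>x \<in> set p\<close> by blast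
        then show "x \<in> interval_set A M"
          unfolding interval_set_def using \<open>u \<in> M\<close> \<open>w \<in> M\<close> by blast
      qed
    qed
  qed
  have mini: "card M \<le> card M'" if geo': "geodetic V A M'" for M'
  proof -
    have M'V: "M' \<subseteq> V" and IV: "interval_set A M' = V" using geo' by (auto simp: geodetic_def)
    have finM': "finite M'" using M'V finV by (rule finite_subset)
    have onp: "\<exists>u v p. u \<in> M' \<and> v \<in> M' \<and> dpath A u v p \<and> x \<in> set p" if "x \<in> V" for x
    proof -
      have "x \<in> interval_set A M'" using IV that by simp
      then obtain u v p where "u \<in> M'" "v \<in> M'"
        "shortest_dpath A u v p \<and> x \<in> set p \<or> shortest_dpath A v u p \<and> x \<in> set p"
        unfolding interval_set_def interval_def by blast
      then show ?thesis unfolding shortest_dpath_def by blast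
    qed
    have LM': "leaves V A \<subseteq> M'"
    proof
      fix l assume "l \<in> leaves V A"
      then have lf: "leaf V A l" by (simp add: leaves_def)
      then have lV: "l \<in> V" and c1: "card {w \<in> V. uadj A l w} = 1" by (auto simp: leaf_def)
      obtain u v p where uvp: "u \<in> M'" "v \<in> M'" "dpath A u v p" "l \<in> set p"
        using onp[OF lV] by blast
      show "l \<in> M'"
      proof (rule ccontr)
        assume lM: "l \<notin> M'"
        have hp: "hd p = u" "last p = v" "p \<noteq> []" "distinct p" using uvp(3) by (auto simp: dpath_def)
        have lu: "l \<noteq> u" "l \<noteq> v" using lM uvp(1,2) by auto
        obtain p1 p2 where pp: "p = p1 @ l # p2" using split_list[OF uvp(4)] by blast
        have p1ne: "p1 \<noteq> []" using pp hp(1) lu by auto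
        have p2ne: "p2 \<noteq> []" using pp hp(2) lu by auto
        have sp: "successively (\<lambda>a b. (a, b) \<in> A) p" by (rule dpath_succ[OF uvp(3)])
        have ay: "(last p1, l) \<in> A" and yb: "(l, hd p2) \<in> A"
          using sp p1ne p2ne unfolding pp successively_append_iff by (auto simp: successively_Cons)
        have dpp: "distinct (p1 @ l # p2)" using hp(4) pp by simp
        then have d12: "set p1 \<inter> set p2 = {}" by auto
        have ab: "last p1 \<noteq> hd p2" using d12 p1ne p2ne by (metis disjoint_iff last_in_set hd_in_set)
        have "{last p1, hd p2} \<subseteq> {w \<in> V. uadj A l w}"
          using ay yb dg by (auto simp: uadj_def digraph_def)
        moreover have "finite {w \<in> V. uadj A l w}" using finV by simp
        ultimately have "card {last p1, hd p2} \<le> 1" using c1 card_mono by metis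
        then show False using ab by simp
      qed
    qed
    have SM': "S \<inter> M' \<noteq> {}" if SS: "S \<in> ?SS" for S
    proof -
      have z: "s S \<in> S" using sS[OF SS] .
      then have zV: "s S \<in> V" using SV[OF SS] by blast
      obtain u v p where uvp: "u \<in> M'" "v \<in> M'" "dpath A u v p" "s S \<in> set p"
        using onp[OF zV] by blast
      have hp: "hd p = u" "last p = v" using uvp(3) by (auto simp: dpath_def)
      have r: "(u, s S) \<in> A\<^sup>*" "(s S, v) \<in> A\<^sup>*"
        using succ_rtrancl[OF dpath_succ[OF uvp(3)] uvp(4)] hp by auto
      from SS have "source_set V A S \<or> sink_set V A S" by simp
      then show ?thesis
      proof
        assume "source_set V A S"
        then have "u \<in> S" using src_closed[OF dg _ z r(1)] by blast
        then show ?thesis using uvp(1) by blast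
      next
        assume "sink_set V A S"
        then have "v \<in> S" using snk_closed[OF dg _ z r(2)] by blast
        then show ?thesis using uvp(2) by blast
      qed
    qed
    define sc where "sc m = {w \<in> V. (m, w) \<in> A\<^sup>* \<and> (w, m) \<in> A\<^sup>*}" for m
    define g where "g m = (if m \<in> leaves V A then m else SOME y. y \<in> sc m \<inter> M')" for m
    have nonleaf: "\<exists>S. S \<in> ?SS \<and> m = s S \<and> S = sc m"
      if mm: "m \<in> M" "m \<notin> leaves V A" for m
    proof -
      obtain S where S: "S \<in> ?SS" "m = s S" using mm M_def by blast
      have "scc V A S" using S(1) by (auto simp: source_set_def sink_set_def)
      have "S = {w \<in> V. (s S, w) \<in> A\<^sup>* \<and> (w, s S) \<in> A\<^sup>*}"
        by (rule scc_eq[OF \<open>scc V A S\<close> sS[OF S(1)]])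
      then have "S = sc m" using S(2) sc_def by simp
      then show ?thesis using S by blast
    qed
    have gprop: "g m \<in> sc m \<inter> M' \<and> sc m \<inter> leaves V A = {}"
      if mm: "m \<in> M" "m \<notin> leaves V A" for m
    proof -
      obtain S where S: "S \<in> ?SS" "m = s S" "S = sc m" using nonleaf[OF mm] by blast
      have "\<exists>y. y \<in> sc m \<inter> M'" using SM'[OF S(1)] S(3) by blast
      then have "(SOME y. y \<in> sc m \<inter> M') \<in> sc m \<inter> M'" by (rule someI_ex)
      then have "g m \<in> sc m \<inter> M'" unfolding g_def using mm(2) by simp
      moreover have "sc m \<inter> leaves V A = {}" using S(1,3) by simp
      ultimately show ?thesis by blast
    qed
    have inj: "inj_on g M"
    proof (rule inj_onI)
      fix m1 m2 assume m: "m1 \<in> M" "m2 \<in> M" "g m1 = g m2"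
      show "m1 = m2"
      proof (cases "m1 \<in> leaves V A"; cases "m2 \<in> leaves V A")
        assume "m1 \<in> leaves V A" "m2 \<in> leaves V A"
        then show ?thesis using m(3) g_def by simp
      next
        assume a: "m1 \<in> leaves V A" "m2 \<notin> leaves V A"
        then have "g m1 = m1" using g_def by simp
        have "g m2 \<in> sc m2" "sc m2 \<inter> leaves V A = {}" using gprop[OF m(2) a(2)] by simp_all
        have gl: "g m2 \<in> leaves V A" using m(3) a(1) \<open>g m1 = m1\<close> by simp
        have False using \<open>sc m2 \<inter> leaves V A = {}\<close> \<open>g m2 \<in> sc m2\<close> gl by (simp add: disjoint_iff)
        then show ?thesis ..
      next
        assume a: "m1 \<notin> leaves V A" "m2 \<in> leaves V A"
        then have "g m2 = m2" using g_def by simp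
        have "g m1 \<in> sc m1" "sc m1 \<inter> leaves V A = {}" using gprop[OF m(1) a(1)] by simp_all
        have gl: "g m1 \<in> leaves V A" using m(3) a(2) \<open>g m2 = m2\<close> by simp
        have False using \<open>sc m1 \<inter> leaves V A = {}\<close> \<open>g m1 \<in> sc m1\<close> gl by (simp add: disjoint_iff)
        then show ?thesis ..
      next
        assume a: "m1 \<notin> leaves V A" "m2 \<notin> leaves V A"
        obtain S1 where S1: "S1 \<in> ?SS" "m1 = s S1" "S1 = sc m1" using nonleaf[OF m(1) a(1)] by blast
        obtain S2 where S2: "S2 \<in> ?SS" "m2 = s S2" "S2 = sc m2" using nonleaf[OF m(2) a(2)] by blast
        have y: "g m1 \<in> sc m1" "g m1 \<in> sc m2" using gprop[OF m(1) a(1)] gprop[OF m(2) a(2)] m(3) by auto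
        have sc1: "scc V A S1" and sc2: "scc V A S2" using S1(1) S2(1)
          by (auto simp: source_set_def sink_set_def)
        have "g m1 \<in> S1" "g m1 \<in> S2" using y S1(3) S2(3) by simp_all
        then have "S1 = sc (g m1)" "S2 = sc (g m1)"
          using scc_eq[OF sc1, of "g m1"] scc_eq[OF sc2, of "g m1"] unfolding sc_def by simp_all
        then show ?thesis using S1(2) S2(2) by simp
      qed
    qed
    have "g ` M \<subseteq> M'"
    proof
      fix y assume "y \<in> g ` M"
      then obtain m where m: "m \<in> M" "y = g m" by blast
      show "y \<in> M'"
      proof (cases "m \<in> leaves V A")
        case True then show ?thesis using m LM' g_def by auto
      next
        case False then show ?thesis using gprop[OF m(1) False] m(2) by blast
      qed
    qed
    then show ?thesis using card_inj_on_le[OF inj _ finM'] by blast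
  qed
  show ?thesis using geo mini by blast
qed

end
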